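(* There is a finite set $D$ and an infinite set $\Omega \subseteq \mathbf{W}_D$ of weightings such that $\mathrm{wPol}(\mathrm{Imp}(\Omega)) \neq \mathrm{wClone}(\Omega)$.
   Context: Let $\overline{\mathbb{Q}}=\mathbb{Q}\cup\{\infty\}$. An $m$-ary weighted relation on a finite set $D$ ($m\ge1$) is a map $\gamma:D^m\to\overline{\mathbb{Q}}$; $\mathbf{\Phi}_D$ denotes the set of all of them, and $\mathrm{Feas}(\gamma)=\{\mathbf{x}:\gamma(\mathbf{x})<\infty\}$. A $k$-ary operation is a map $f:D^k\to D$, applied to tuples coordinatewise; $f$ is a polymorphism of $\gamma$ if $f(\mathbf{x}_1,\dots,\mathbf{x}_k)\in\mathrm{Feas}(\gamma)$ whenever all $\mathbf{x}_i\in\mathrm{Feas}(\gamma)$; $\mathrm{Pol}(\Gamma)$ is the set of common polymorphisms of all $\gamma\in\Gamma$. Projections are $e^{(k)}_i(x_1,\dots,x_k)=x_i$. The superposition $f[g_1,\dots,g_k]$ of a $k$-ary $f$ with $\ell$-ary $g_i$ is $\mathbf{x}\mapsto f(g_1(\mathbf{x}),\dots,g_k(\mathbf{x}))$. A clone is a set of operations containing all projections and closed under superposition; $C^{(k)}$ denotes its $k$-ary members. A $k$-ary weighting of a clone $C$ is a function $\omega:C^{(k)}\to\mathbb{Q}$ with $\sum_{f\in C^{(k)}}\omega(f)=0$ and $\omega(f)<0$ only if $f$ is a projection. For $g_1,\dots,g_k\in C^{(\ell)}$, the superposition $\omega[g_1,\dots,g_k]:C^{(\ell)}\to\mathbb{Q}$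 is $\omega[g_1,\dots,g_k](f')=\sum_{f\in C^{(k)}:f[g_1,\dots,g_k]=f'}\omega(f)$; it is proper if it is again a weighting. A weighted clone is a non-empty set of weightings of a fixed clone $C$ closed under scaling by non-negative rationals, addition of weightings of equal arity, and proper superposition with operations of $C$. $\mathbf{W}_D$ is the set of all weightings of all clones on $D$. For $\Omega\subseteq\mathbf{W}_D$, extend each weighting by zeros to a weighting of the smallest clone containing all clones underlying members of $\Omega$; $\mathrm{wClone}(\Omega)$ is the smallest weighted clone containing these extended weightings. A $k$-ary weighting $\omega$ of a clone $C$ is a weighted polymorphism of $\gamma$ ($\gamma$ is improved by $\omega$) if $C\subseteq\mathrm{Pol}(\gamma)$ and for all $\mathbf{x}_1,\dots,\mathbf{x}_k\in\mathrm{Feas}(\gamma)$, $\sum_{f\in C^{(k)}}\omega(f)\gamma(f(\mathbf{x}_1,\dots,\mathbf{x}_k))\le0$. $\mathrm{Imp}(\Omega)$ is the set of weighted relations in $\mathbf{\Phi}_D$ improved by every $\omega\in\Omega$; for $\Gamma\subseteq\mathbf{\Phi}_D$, $\mathrm{wPol}(\Gamma)$ is the set of all weightings of the clone $\mathrm{Pol}(\Gamma)$ that are weighted polymorphisms of every $\gamma\in\Gamma$. *)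

theory Defs
  imports Complex_Main
begin

text \<open>Tuples in D^m are represented as lists of length m with entries in D.
An operation is a pair (k, f) with arity k >= 1 and f : D^k -> D; outside D^k the
function is normalised to undefined, so equality of operations is extensional on D^k.\<close>

type_synonym 'a operation = "nat \<times> ('a list \<Rightarrow> 'a)"

definition tuples_in :: "'a set \<Rightarrow> nat \<Rightarrow> 'a list \<Rightarrow> bool" where
  "tuples_in D m xs \<longleftrightarrow> length xs = m \<and> set xs \<subseteq> D"

definition is_op :: "'a set \<Rightarrow> 'a operation \<Rightarrow> bool" where
  "is_op D f \<longleftrightarrow> fst f \<ge> 1
     \<and> (\<forall>xs. tuples_in D (fst f) xs \<longrightarrow> snd f xs \<in> D)
     \<and> (\<forall>xs. \<not> tuples_in D (fst f) xs \<longrightarrow> snd f xs = undefined)"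

definition proj :: "'a set \<Rightarrow> nat \<Rightarrow> nat \<Rightarrow> 'a operation" where
  "proj D k i = (k, \<lambda>xs. if tuples_in D k xs then xs ! i else undefined)"

definition is_proj :: "'a set \<Rightarrow> 'a operation \<Rightarrow> bool" where
  "is_proj D f \<longleftrightarrow> (\<exists>i < fst f. f = proj D (fst f) i)"

definition superpos :: "'a set \<Rightarrow> 'a operation \<Rightarrow> 'a operation list \<Rightarrow> nat \<Rightarrow> 'a operation" where
  "superpos D f gs l = (l, \<lambda>xs. if tuples_in D l xs then snd f (map (\<lambda>g. snd g xs) gs) else undefined)"

definition ar :: "'a operation set \<Rightarrow> nat \<Rightarrow> 'a operation set" where
  "ar C k = {f \<in> C. fst f = k}"

definition clone :: "'a set \<Rightarrow> 'a operation set \<Rightarrow> bool" where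
  "clone D C \<longleftrightarrow> C \<subseteq> {f. is_op D f}
     \<and> (\<forall>k i. 1 \<le> k \<longrightarrow> i < k \<longrightarrow> proj D k i \<in> C)
     \<and> (\<forall>f\<in>C. \<forall>l\<ge>1. \<forall>gs. length gs = fst f \<longrightarrow> set gs \<subseteq> ar C l \<longrightarrow> superpos D f gs l \<in> C)"

definition clone_gen :: "'a set \<Rightarrow> 'a operation set \<Rightarrow> 'a operation set" where
  "clone_gen D S = \<Inter>{C. clone D C \<and> S \<subseteq> C}"

text \<open>A weighting is a triple (C, k, w): the underlying clone C, the arity k, and
w : C^(k) -> Q, extended by 0 outside C^(k).\<close>

type_synonym 'a weighting = "'a operation set \<times> nat \<times> ('a operation \<Rightarrow> rat)"

definition wclone :: "'a weighting \<Rightarrow> 'a operation set" where "wclone w = fst w"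
definition warity :: "'a weighting \<Rightarrow> nat" where "warity w = fst (snd w)"
definition wfun :: "'a weighting \<Rightarrow> 'a operation \<Rightarrow> rat" where "wfun w = snd (snd w)"

definition weighting :: "'a set \<Rightarrow> 'a weighting \<Rightarrow> bool" where
  "weighting D w \<longleftrightarrow> clone D (wclone w) \<and> warity w \<ge> 1
     \<and> (\<forall>f. wfun w f \<noteq> 0 \<longrightarrow> f \<in> ar (wclone w) (warity w))
     \<and> sum (wfun w) (ar (wclone w) (warity w)) = 0
     \<and> (\<forall>f. wfun w f < 0 \<longrightarrow> is_proj D f)"

definition wsuper :: "'a set \<Rightarrow> 'a weighting \<Rightarrow> 'a operation list \<Rightarrow> nat \<Rightarrow> 'a weighting" where
  "wsuper D w gs l = (wclone w, l, \<lambda>f'. if f' \<in> ar (wclone w) l then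
       (\<Sum>f\<in>{f \<in> ar (wclone w) (warity w). superpos D f gs l = f'}. wfun w f) else 0)"

definition weighted_clone :: "'a set \<Rightarrow> 'a weighting set \<Rightarrow> bool" where
  "weighted_clone D W \<longleftrightarrow> W \<noteq> {}
     \<and> (\<exists>C. \<forall>w\<in>W. weighting D w \<and> wclone w = C)
     \<and> (\<forall>w\<in>W. \<forall>c::rat. c \<ge> 0 \<longrightarrow> (wclone w, warity w, \<lambda>f. c * wfun w f) \<in> W)
     \<and> (\<forall>w\<in>W. \<forall>w'\<in>W. warity w = warity w' \<longrightarrow> (wclone w, warity w, \<lambda>f. wfun w f + wfun w' f) \<in> W)
     \<and> (\<forall>w\<in>W. \<forall>l\<ge>1. \<forall>gs. length gs = warity w \<longrightarrow> set gs \<subseteq> ar (wclone w) l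
           \<longrightarrow> weighting D (wsuper D w gs l) \<longrightarrow> wsuper D w gs l \<in> W)"

definition WD :: "'a set \<Rightarrow> 'a weighting set" where
  "WD D = {w. weighting D w}"

definition wClone :: "'a set \<Rightarrow> 'a weighting set \<Rightarrow> 'a weighting set" where
  "wClone D \<Omega> = (let C0 = clone_gen D (\<Union>w\<in>\<Omega>. wclone w);
                      E = (\<lambda>w. (C0, warity w, wfun w)) ` \<Omega>
                  in \<Inter>{W. weighted_clone D W \<and> (\<forall>w\<in>W. wclone w = C0) \<and> E \<subseteq> W})"

text \<open>An m-ary weighted relation is (m, g) with g : D^m -> Q \<union> {\<infinity>}, where None
represents \<infinity>; outside D^m, g is normalised to None.\<close>

type_synonym 'a wrel = "nat \<times> ('a list \<Rightarrow> rat option)"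

definition Phi :: "'a set \<Rightarrow> 'a wrel set" where
  "Phi D = {g. fst g \<ge> 1 \<and> (\<forall>xs. \<not> tuples_in D (fst g) xs \<longrightarrow> snd g xs = None)}"

definition Feas :: "'a set \<Rightarrow> 'a wrel \<Rightarrow> 'a list set" where
  "Feas D g = {xs. tuples_in D (fst g) xs \<and> snd g xs \<noteq> None}"

definition apply_op :: "'a operation \<Rightarrow> 'a list list \<Rightarrow> nat \<Rightarrow> 'a list" where
  "apply_op f xss m = map (\<lambda>j. snd f (map (\<lambda>x. x ! j) xss)) [0..<m]"

definition is_pol :: "'a set \<Rightarrow> 'a operation \<Rightarrow> 'a wrel \<Rightarrow> bool" where
  "is_pol D f g \<longleftrightarrow> (\<forall>xss. length xss = fst f \<longrightarrow> set xss \<subseteq> Feas D g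
       \<longrightarrow> apply_op f xss (fst g) \<in> Feas D g)"

definition Pol :: "'a set \<Rightarrow> 'a wrel set \<Rightarrow> 'a operation set" where
  "Pol D \<Gamma> = {f. is_op D f \<and> (\<forall>g\<in>\<Gamma>. is_pol D f g)}"

definition is_wpol :: "'a set \<Rightarrow> 'a weighting \<Rightarrow> 'a wrel \<Rightarrow> bool" where
  "is_wpol D w g \<longleftrightarrow> wclone w \<subseteq> Pol D {g}
     \<and> (\<forall>xss. length xss = warity w \<longrightarrow> set xss \<subseteq> Feas D g
          \<longrightarrow> (\<Sum>f\<in>ar (wclone w) (warity w). wfun w f * the (snd g (apply_op f xss (fst g)))) \<le> 0)"

definition Imp :: "'a set \<Rightarrow> 'a weighting set \<Rightarrow> 'a wrel set" where
  "Imp D \<Omega> = {g \<in> Phi D. \<forall>w\<in>\<Omega>. is_wpol D w g}"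

definition wPol :: "'a set \<Rightarrow> 'a wrel set \<Rightarrow> 'a weighting set" where
  "wPol D \<Gamma> = {w. weighting D w \<and> wclone w = Pol D \<Gamma> \<and> (\<forall>g\<in>\<Gamma>. is_wpol D w g)}"

end

theory Submission
  imports Defs "HOL-Library.FuncSet"
begin

definition D3 :: "nat set" where "D3 = {0,1,2}"
definition CC :: "nat operation set" where "CC = {f. is_op D3 f}"

lemma finD3: "finite D3" by (simp add: D3_def)

lemma clone_CC: "clone D3 CC"
  unfolding clone_def CC_def
proof (intro conjI allI impI ballI)
  fix k i :: nat assume "1 \<le> k" "i < k"
  then show "proj D3 k i \<in> {f. is_op D3 f}"
    by (auto simp: is_op_def proj_def tuples_in_def)
next
  fix f l gs assume f: "f \<in> {f. is_op D3 f}" and l: "1 \<le> l" and gs: "length gs = fst f"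
    and gs2: "set gs \<subseteq> ar {f. is_op D3 f} l"
  have "tuples_in D3 (fst f) (map (\<lambda>g. snd g xs) gs)" if "tuples_in D3 l xs" for xs
    using gs gs2 that unfolding tuples_in_def ar_def is_op_def by auto
  then show "superpos D3 f gs l \<in> {f. is_op D3 f}"
    using f l unfolding superpos_def is_op_def by auto
qed auto

lemma finite_ar: "finite (ar CC k)"
proof -
  define T where "T = {xs. tuples_in D3 k xs}"
  have fT: "finite T" unfolding T_def tuples_in_def
    using finite_lists_length_eq[OF finD3] by (simp add: conj_commute)
  define E :: "(nat list \<Rightarrow> nat) \<Rightarrow> nat operation" where "E = (\<lambda>\<phi>. (k, \<lambda>xs. if xs \<in> T then \<phi> xs else undefined))"
  have "ar CC k \<subseteq> E ` (PiE T (\<lambda>_. D3))"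
  proof
    fix f assume f: "f \<in> ar CC k"
    then have op: "is_op D3 f" and fk: "fst f = k" by (auto simp: ar_def CC_def)
    have "restrict (snd f) T \<in> PiE T (\<lambda>_. D3)" using op fk by (auto simp: T_def is_op_def)
    moreover have "E (restrict (snd f) T) = f"
      using op fk unfolding E_def T_def is_op_def by (cases f) (auto intro!: ext)
    ultimately show "f \<in> E ` (PiE T (\<lambda>_. D3))" by (metis image_eqI)
  qed
  moreover have "finite (E ` (PiE T (\<lambda>_. D3)))" using fT finD3 by (auto intro!: finite_PiE)
  ultimately show ?thesis by (rule finite_subset)
qed

lemma clone_gen_CC: "clone_gen D3 CC = CC"
  unfolding clone_gen_def using clone_CC by blast

definition idop :: "nat operation" where "idop = proj D3 1 0"
definition hop :: "nat operation" where
  "hop = (1, \<lambda>xs. if tuples_in D3 1 xs then (if xs!0 = 2 then 2 else 1) else undefined)"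
definition c2op :: "nat operation" where
  "c2op = (1, \<lambda>xs. if tuples_in D3 1 xs then 2 else undefined)"

lemma tup1: "x \<in> D3 \<Longrightarrow> tuples_in D3 1 [x]" by (simp add: tuples_in_def)

lemma snd_ops:
  assumes "x \<in> D3"
  shows "snd idop [x] = x" "snd hop [x] = (if x = 2 then 2 else 1)" "snd c2op [x] = 2"
  using tup1[OF assms] by (auto simp: idop_def hop_def c2op_def proj_def)

lemma ops_distinct: "idop \<noteq> hop" "idop \<noteq> c2op" "hop \<noteq> c2op"
proof -
  have d: "(0::nat) \<in> D3" by (simp add: D3_def)
  show "idop \<noteq> hop" "idop \<noteq> c2op" "hop \<noteq> c2op"
    using snd_ops[OF d] by auto
qed

lemma ops_distinct2: "idop \<noteq> hop" "idop \<noteq> c2op" "hop \<noteq> c2op" "hop \<noteq> idop" "c2op \<noteq> idop" "c2op \<noteq> hop"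
  using ops_distinct by auto

lemma ops_in: "idop \<in> ar CC 1" "hop \<in> ar CC 1" "c2op \<in> ar CC 1"
proof -
  show "idop \<in> ar CC 1" using clone_CC unfolding clone_def idop_def
    by (auto simp: ar_def proj_def)
  have "is_op D3 hop" unfolding is_op_def hop_def
  proof (intro conjI allI impI)
    fix xs :: "nat list" show "tuples_in D3 (fst (1::nat, \<lambda>xs. if tuples_in D3 1 xs then (if xs!0 = 2 then 2 else 1) else undefined)) xs \<Longrightarrow>
      snd (1::nat, \<lambda>xs. if tuples_in D3 1 xs then (if xs!0 = 2 then 2 else 1) else undefined) xs \<in> D3"
      by (simp add: D3_def)
  qed auto
  then show "hop \<in> ar CC 1" by (simp add: ar_def CC_def hop_def)
  have "is_op D3 c2op" unfolding is_op_def c2op_def by (simp add: D3_def)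
  then show "c2op \<in> ar CC 1" by (simp add: ar_def CC_def c2op_def)
qed

lemma idop_proj: "is_proj D3 idop"
  unfolding is_proj_def idop_def by (auto simp: proj_def)

lemma sum3:
  assumes "\<And>f. f \<notin> {idop, hop, c2op} \<Longrightarrow> w f = 0"
  shows "(\<Sum>f\<in>ar CC 1. w f) = w idop + w hop + w c2op"
proof -
  have "(\<Sum>f\<in>ar CC 1. w f) = (\<Sum>f\<in>{idop, hop, c2op}. w f)"
    by (rule sum.mono_neutral_right[OF finite_ar]) (use ops_in assms in auto)
  also have "\<dots> = w idop + w hop + w c2op" using ops_distinct by (simp add: add.assoc)
  finally show ?thesis .
qed

definition tf :: "nat operation \<Rightarrow> rat" where
  "tf f = (if f = idop then -1 else if f = hop then 1 else 0)"
definition rf :: "nat operation \<Rightarrow> rat" where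
  "rf f = (if f = idop then -1 else if f = c2op then 1 else 0)"
definition tw :: "nat weighting" where "tw = (CC, 1, tf)"
definition om :: "nat \<Rightarrow> nat weighting" where
  "om n = (CC, 1, \<lambda>f. tf f + (1 / of_nat (Suc n)) * rf f)"

lemma tf_vals: "tf idop = -1" "tf hop = 1" "tf c2op = 0"
  using ops_distinct by (auto simp: tf_def)
lemma rf_vals: "rf idop = -1" "rf hop = 0" "rf c2op = 1"
  using ops_distinct by (auto simp: rf_def)

lemma weighting_tw: "weighting D3 tw"
  unfolding weighting_def wclone_def warity_def wfun_def tw_def
proof (simp add: clone_CC, intro conjI allI impI)
  fix f show "tf f \<noteq> 0 \<Longrightarrow> f \<in> ar CC (Suc 0)" using ops_in by (auto simp: tf_def split: if_splits)
  show "tf f < 0 \<Longrightarrow> is_proj D3 f" using idop_proj by (auto simp: tf_def split: if_splits)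
next
  have "(\<Sum>f\<in>ar CC 1. tf f) = 0" by (subst sum3) (auto simp: tf_def ops_distinct2)
  then show "sum tf (ar CC (Suc 0)) = 0" by simp
qed

lemma weighting_om: "weighting D3 (om n)"
  unfolding weighting_def wclone_def warity_def wfun_def om_def
proof (simp add: clone_CC, intro conjI allI impI)
  fix f show "tf f + rf f / (1 + rat_of_nat n) \<noteq> 0 \<Longrightarrow> f \<in> ar CC (Suc 0)"
    using ops_in by (auto simp: tf_def rf_def ops_distinct2 split: if_splits)
  show "tf f + rf f / (1 + rat_of_nat n) < 0 \<Longrightarrow> is_proj D3 f"
    using idop_proj ops_distinct by (auto simp: tf_def rf_def ops_distinct2 split: if_splits)
next
  have "(\<Sum>f\<in>ar CC 1. tf f + rf f / (1 + rat_of_nat n)) = 0"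
    by (subst sum3) (auto simp: tf_def rf_def ops_distinct2)
  then show "(\<Sum>f\<in>ar CC (Suc 0). tf f + rf f / (1 + rat_of_nat n)) = 0" by simp
qed


definition SS :: "(nat \<Rightarrow> rat) \<Rightarrow> nat weighting \<Rightarrow> nat list \<Rightarrow> rat" where
  "SS phi w zs = (\<Sum>f\<in>ar (wclone w) (warity w). wfun w f * phi (snd f zs))"
definition lexle :: "rat \<Rightarrow> rat \<Rightarrow> bool" where
  "lexle a b \<longleftrightarrow> a < 0 \<or> (a = 0 \<and> b \<le> 0)"
definition gam :: "nat \<Rightarrow> rat" where "gam x = (if x = 2 then 0 else 1)"
definition del :: "nat \<Rightarrow> rat" where "del x = (if x = 1 then 1 else 0)"
definition WW :: "nat weighting set" where
  "WW = {w. weighting D3 w \<and> wclone w = CC \<and>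
     (\<forall>zs. tuples_in D3 (warity w) zs \<longrightarrow> lexle (SS gam w zs) (SS del w zs))}"

lemma tup1E: assumes "tuples_in D3 1 zs" obtains x where "zs = [x]" "x \<in> D3"
  using assms unfolding tuples_in_def by (cases zs) auto

lemma SS_om: assumes "x \<in> D3"
  shows "SS phi (om n) [x] = - (1 + 1 / of_nat (Suc n)) * phi x + phi (if x = 2 then 2 else 1)
     + (1 / of_nat (Suc n)) * phi 2"
proof -
  have "SS phi (om n) [x] = (\<Sum>f\<in>ar CC 1. (tf f + (1 / of_nat (Suc n)) * rf f) * phi (snd f [x]))"
    by (simp add: SS_def om_def wclone_def warity_def wfun_def)
  also have "\<dots> = - (1 + 1 / of_nat (Suc n)) * phi x + phi (if x = 2 then 2 else 1)
     + (1 / of_nat (Suc n)) * phi 2"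
    by (subst sum3) (auto simp: tf_def rf_def ops_distinct2 snd_ops[OF assms] algebra_simps)
  finally show ?thesis .
qed

lemma SS_tw: assumes "x \<in> D3"
  shows "SS phi tw [x] = - phi x + phi (if x = 2 then 2 else 1)"
proof -
  have "SS phi tw [x] = (\<Sum>f\<in>ar CC 1. tf f * phi (snd f [x]))"
    by (simp add: SS_def tw_def wclone_def warity_def wfun_def)
  also have "\<dots> = - phi x + phi (if x = 2 then 2 else 1)"
    by (subst sum3) (auto simp: tf_def ops_distinct2 snd_ops[OF assms])
  finally show ?thesis .
qed

lemma om_in_WW: "om n \<in> WW"
  unfolding WW_def
proof (intro CollectI conjI allI impI)
  show "weighting D3 (om n)" by (rule weighting_om)
  show "wclone (om n) = CC" by (simp add: om_def wclone_def)
  fix zs assume "tuples_in D3 (warity (om n)) zs"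
  then have "tuples_in D3 1 zs" by (simp add: om_def warity_def)
  then obtain x where x: "zs = [x]" "x \<in> D3" by (rule tup1E)
  have pos: "(0::rat) < 1 / of_nat (Suc n)" by simp
  show "lexle (SS gam (om n) zs) (SS del (om n) zs)"
    using x(2) pos unfolding x(1) SS_om[OF x(2)] by (auto simp: lexle_def gam_def del_def D3_def algebra_simps)
qed

lemma tw_notin_WW: "tw \<notin> WW"
proof
  assume "tw \<in> WW"
  moreover have "tuples_in D3 (warity tw) [0]" by (simp add: tw_def warity_def tuples_in_def D3_def)
  ultimately have "lexle (SS gam tw [0]) (SS del tw [0])" unfolding WW_def by blast
  moreover have "(0::nat) \<in> D3" by (simp add: D3_def)
  ultimately show False unfolding SS_tw[OF \<open>0 \<in> D3\<close>] by (simp add: lexle_def gam_def del_def)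
qed


lemma weighting_scale:
  assumes w: "weighting D w" and c: "c \<ge> 0"
  shows "weighting D (wclone w, warity w, \<lambda>f. c * wfun w f)"
  unfolding weighting_def wclone_def warity_def wfun_def fst_conv snd_conv
proof (intro conjI allI impI)
  show "clone D (fst w)" "1 \<le> fst (snd w)" using w by (simp_all add: weighting_def wclone_def warity_def)
  fix f
  show "c * snd (snd w) f \<noteq> 0 \<Longrightarrow> f \<in> ar (fst w) (fst (snd w))"
  proof -
    assume "c * snd (snd w) f \<noteq> 0"
    then have "snd (snd w) f \<noteq> 0" by auto
    then show ?thesis using w unfolding weighting_def wclone_def warity_def wfun_def by blast
  qed
  show "c * snd (snd w) f < 0 \<Longrightarrow> is_proj D f"
  proof -
    assume "c * snd (snd w) f < 0"
    then have "snd (snd w) f < 0" using c by (simp add: mult_less_0_iff)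
    then show ?thesis using w unfolding weighting_def wfun_def by blast
  qed
next
  have "(\<Sum>f\<in>ar (fst w) (fst (snd w)). c * snd (snd w) f) = c * (\<Sum>f\<in>ar (fst w) (fst (snd w)). snd (snd w) f)"
    by (simp add: sum_distrib_left)
  then show "(\<Sum>f\<in>ar (fst w) (fst (snd w)). c * snd (snd w) f) = 0"
    using w by (simp add: weighting_def wclone_def warity_def wfun_def)
qed

lemma weighting_add:
  assumes w: "weighting D w" and w': "weighting D w'" and a: "warity w = warity w'" and cl: "wclone w = wclone w'"
  shows "weighting D (wclone w, warity w, \<lambda>f. wfun w f + wfun w' f)"
  unfolding weighting_def wclone_def[of "(_,_,_)"] warity_def[of "(_,_,_)"] wfun_def[of "(_,_,_)"] fst_conv snd_conv
proof (intro conjI allI impI)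
  show "clone D (wclone w)" "1 \<le> warity w" using w by (simp_all add: weighting_def)
  fix f
  show "wfun w f + wfun w' f \<noteq> 0 \<Longrightarrow> f \<in> ar (wclone w) (warity w)"
  proof -
    assume "wfun w f + wfun w' f \<noteq> 0"
    then have "wfun w f \<noteq> 0 \<or> wfun w' f \<noteq> 0" by auto
    then show ?thesis using w w' a cl unfolding weighting_def by metis
  qed
  show "wfun w f + wfun w' f < 0 \<Longrightarrow> is_proj D f"
  proof -
    assume "wfun w f + wfun w' f < 0"
    then have "wfun w f < 0 \<or> wfun w' f < 0" by linarith
    then show ?thesis using w w' unfolding weighting_def by metis
  qed
next
  have "(\<Sum>f\<in>ar (wclone w) (warity w). wfun w f + wfun w' f) =
     (\<Sum>f\<in>ar (wclone w) (warity w). wfun w f) + (\<Sum>f\<in>ar (wclone w') (warity w'). wfun w' f)"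
    using a cl by (simp add: sum.distrib)
  then show "(\<Sum>f\<in>ar (wclone w) (warity w). wfun w f + wfun w' f) = 0"
    using w w' unfolding weighting_def by simp
qed

lemma SS_scale: "SS phi (wclone w, warity w, \<lambda>f. c * wfun w f) zs = c * SS phi w zs"
  by (simp add: SS_def wclone_def warity_def wfun_def sum_distrib_left mult.assoc)

lemma SS_add: "warity w = warity w' \<Longrightarrow> wclone w = wclone w' \<Longrightarrow>
  SS phi (wclone w, warity w, \<lambda>f. wfun w f + wfun w' f) zs = SS phi w zs + SS phi w' zs"
  by (simp add: SS_def wclone_def warity_def wfun_def sum.distrib algebra_simps)

lemma SS_super:
  assumes w: "wclone w = CC" and l: "1 \<le> l" and gs: "length gs = warity w" "set gs \<subseteq> ar CC l"
    and zs: "tuples_in D3 l zs"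
  shows "SS phi (wsuper D3 w gs l) zs = SS phi w (map (\<lambda>g. snd g zs) gs)"
proof -
  let ?k = "warity w"
  let ?sp = "\<lambda>f. superpos D3 f gs l"
  have img: "?sp ` ar CC ?k \<subseteq> ar CC l"
  proof
    fix h assume "h \<in> ?sp ` ar CC ?k"
    then obtain f where f: "f \<in> ar CC ?k" "h = ?sp f" by auto
    have "?sp f \<in> CC" using clone_CC f gs l unfolding clone_def ar_def by auto
    then show "h \<in> ar CC l" using f by (simp add: ar_def superpos_def)
  qed
  have "SS phi (wsuper D3 w gs l) zs =
     (\<Sum>f'\<in>ar CC l. (\<Sum>f\<in>{f \<in> ar CC ?k. ?sp f = f'}. wfun w f) * phi (snd f' zs))"
    unfolding SS_def wsuper_def wclone_def warity_def wfun_def using w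
    by (intro sum.cong) (auto simp: wclone_def warity_def wfun_def)
  also have "\<dots> = (\<Sum>f'\<in>ar CC l. (\<Sum>f\<in>{f \<in> ar CC ?k. ?sp f = f'}. wfun w f * phi (snd (?sp f) zs)))"
    by (intro sum.cong refl) (auto simp: sum_distrib_right)
  also have "\<dots> = (\<Sum>f\<in>ar CC ?k. wfun w f * phi (snd (?sp f) zs))"
    by (rule sum.group[OF finite_ar finite_ar img])
  also have "\<dots> = SS phi w (map (\<lambda>g. snd g zs) gs)"
    unfolding SS_def w using zs by (intro sum.cong refl) (simp add: superpos_def)
  finally show ?thesis .
qed

lemma lexle_scale: "lexle a b \<Longrightarrow> (c::rat) \<ge> 0 \<Longrightarrow> lexle (c * a) (c * b)"
  unfolding lexle_def
  by (cases "c = 0") (auto simp: mult_pos_neg mult_nonneg_nonpos)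

lemma tuples_map:
  assumes "set gs \<subseteq> ar CC l" "tuples_in D3 l zs"
  shows "tuples_in D3 (length gs) (map (\<lambda>g. snd g zs) gs)"
  using assms unfolding tuples_in_def ar_def CC_def is_op_def by auto

lemma wc_WW: "weighted_clone D3 WW"
  unfolding weighted_clone_def
proof (intro conjI ballI allI impI)
  show "WW \<noteq> {}" using om_in_WW by blast
  show "\<exists>C. \<forall>w\<in>WW. weighting D3 w \<and> wclone w = C" by (rule exI[of _ CC]) (auto simp: WW_def)
next
  fix w and c :: rat assume w: "w \<in> WW" and c: "0 \<le> c"
  show "(wclone w, warity w, \<lambda>f. c * wfun w f) \<in> WW"
    unfolding WW_def
  proof (intro CollectI conjI allI impI)
    show "weighting D3 (wclone w, warity w, \<lambda>f. c * wfun w f)"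
    proof -
      have "weighting D3 w" using w by (simp add: WW_def)
      then show ?thesis using weighting_scale c by blast
    qed
    show "wclone (wclone w, warity w, \<lambda>f. c * wfun w f) = CC" using w by (simp add: WW_def wclone_def)
    fix zs assume "tuples_in D3 (warity (wclone w, warity w, \<lambda>f. c * wfun w f)) zs"
    then have "tuples_in D3 (warity w) zs" by (simp add: warity_def)
    then have "lexle (SS gam w zs) (SS del w zs)" using w by (auto simp: WW_def)
    then show "lexle (SS gam (wclone w, warity w, \<lambda>f. c * wfun w f) zs) (SS del (wclone w, warity w, \<lambda>f. c * wfun w f) zs)"
      unfolding SS_scale using c lexle_scale by blast
  qed
next
  fix w w' assume w: "w \<in> WW" and w': "w' \<in> WW" and a: "warity w = warity w'"
  have cl: "wclone w = wclone w'" using w w' by (simp add: WW_def)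
  show "(wclone w, warity w, \<lambda>f. wfun w f + wfun w' f) \<in> WW"
    unfolding WW_def
  proof (intro CollectI conjI allI impI)
    show "weighting D3 (wclone w, warity w, \<lambda>f. wfun w f + wfun w' f)"
    proof -
      have "weighting D3 w" "weighting D3 w'" "wclone w = wclone w'" using w w' by (simp_all add: WW_def)
      then show ?thesis using weighting_add a by blast
    qed
    show "wclone (wclone w, warity w, \<lambda>f. wfun w f + wfun w' f) = CC" using w by (simp add: WW_def wclone_def)
    fix zs assume "tuples_in D3 (warity (wclone w, warity w, \<lambda>f. wfun w f + wfun w' f)) zs"
    then have zs: "tuples_in D3 (warity w) zs" by (simp add: warity_def)
    then have "lexle (SS gam w zs) (SS del w zs)" using w by (auto simp: WW_def)
    moreover have "lexle (SS gam w' zs) (SS del w' zs)" using w' zs a by (auto simp: WW_def)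
    ultimately show "lexle (SS gam (wclone w, warity w, \<lambda>f. wfun w f + wfun w' f) zs) (SS del (wclone w, warity w, \<lambda>f. wfun w f + wfun w' f) zs)"
      unfolding SS_add[OF a cl] lexle_def by auto
  qed
next
  fix w l gs assume w: "w \<in> WW" and l: "1 \<le> l" and gs: "length gs = warity w"
    and gs2: "set gs \<subseteq> ar (wclone w) l" and ws: "weighting D3 (wsuper D3 w gs l)"
  have wc: "wclone w = CC" using w by (simp add: WW_def)
  show "wsuper D3 w gs l \<in> WW"
    unfolding WW_def
  proof (intro CollectI conjI allI impI)
    show "weighting D3 (wsuper D3 w gs l)" by (rule ws)
    show "wclone (wsuper D3 w gs l) = CC" using wc by (simp add: wsuper_def wclone_def)
    fix zs assume "tuples_in D3 (warity (wsuper D3 w gs l)) zs"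
    then have zs: "tuples_in D3 l zs" by (simp add: wsuper_def warity_def)
    have "tuples_in D3 (warity w) (map (\<lambda>g. snd g zs) gs)"
      using tuples_map[OF gs2[unfolded wc] zs] gs by simp
    then have "lexle (SS gam w (map (\<lambda>g. snd g zs) gs)) (SS del w (map (\<lambda>g. snd g zs) gs))"
      using w by (auto simp: WW_def)
    then show "lexle (SS gam (wsuper D3 w gs l) zs) (SS del (wsuper D3 w gs l) zs)"
      using SS_super[OF wc l gs gs2[unfolded wc] zs] by simp
  qed
qed

lemma arch: fixes A B :: rat assumes h: "\<And>n. A + (1 / of_nat (Suc n)) * B \<le> 0" shows "A \<le> 0"
proof (rule ccontr)
  assume "\<not> A \<le> 0" then have A: "A > 0" by simp
  obtain n :: nat where n: "\<bar>B\<bar> / A < of_nat n" using reals_Archimedean2 by blast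
  have "\<bar>B\<bar> < A * of_nat n" using n A by (simp add: divide_less_eq mult.commute)
  also have "\<dots> < A * of_nat (Suc n)" using A by simp
  finally have 1: "\<bar>B\<bar> / of_nat (Suc n) < A" by (simp add: divide_less_eq)
  have "(1 / of_nat (Suc n)) * (- \<bar>B\<bar>) \<le> (1 / of_nat (Suc n)) * B"
    by (rule mult_left_mono) auto
  then have "- A < (1 / of_nat (Suc n)) * B" using 1 by simp
  then show False using h[of n] by simp
qed

lemma om_eta: "om n = (CC, warity (om n), wfun (om n))"
  by (simp add: om_def warity_def wfun_def)

lemma wclone_om: "wclone (om n) = CC" by (simp add: om_def wclone_def)

lemma inj_om: "inj om"
proof (rule injI)
  fix m n assume "om m = om n"
  then have "wfun (om m) idop = wfun (om n) idop" by simp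
  then show "m = n" by (simp add: om_def wfun_def tf_vals rf_vals)
qed

lemma wClone_sub: "wClone D3 (range om) \<subseteq> WW"
proof -
  have C0: "clone_gen D3 (\<Union>w\<in>range om. wclone w) = CC"
    using clone_gen_CC by (simp add: wclone_om)
  have E: "(\<lambda>w. (CC, warity w, wfun w)) ` range om \<subseteq> WW"
    using om_in_WW om_eta by (auto simp del: om_def)
  have "\<forall>w\<in>WW. wclone w = CC" by (simp add: WW_def)
  then show ?thesis unfolding wClone_def Let_def C0 using wc_WW E by (intro Inter_lower) blast
qed

lemma Pol_Imp: "Pol D3 (Imp D3 (range om)) = CC"
proof
  show "Pol D3 (Imp D3 (range om)) \<subseteq> CC" by (auto simp: Pol_def CC_def)
  show "CC \<subseteq> Pol D3 (Imp D3 (range om))"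
  proof
    fix f assume f: "f \<in> CC"
    have "is_pol D3 f g" if "g \<in> Imp D3 (range om)" for g
    proof -
      have "is_wpol D3 (om 0) g" using that by (auto simp: Imp_def)
      then have "f \<in> Pol D3 {g}" using f by (auto simp: is_wpol_def wclone_om)
      then show ?thesis by (simp add: Pol_def)
    qed
    then show "f \<in> Pol D3 (Imp D3 (range om))" using f by (simp add: Pol_def CC_def)
  qed
qed

lemma tw_in_wPol: "tw \<in> wPol D3 (Imp D3 (range om))"
  unfolding wPol_def
proof (intro CollectI conjI ballI)
  show "weighting D3 tw" by (rule weighting_tw)
  show "wclone tw = Pol D3 (Imp D3 (range om))" by (simp add: Pol_Imp tw_def wclone_def)
  fix g assume g: "g \<in> Imp D3 (range om)"
  then have wp: "\<And>n. is_wpol D3 (om n) g" by (auto simp: Imp_def)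
  show "is_wpol D3 tw g" unfolding is_wpol_def
  proof (intro conjI allI impI)
    show "wclone tw \<subseteq> Pol D3 {g}" using wp[of 0] unfolding is_wpol_def wclone_om by (simp add: tw_def wclone_def)
    fix xss :: "nat list list" assume l: "length xss = warity tw" and x: "set xss \<subseteq> Feas D3 g"
    define F where "F f = the (snd g (apply_op f xss (fst g)))" for f :: "nat operation"
    define A where "A = (\<Sum>f\<in>ar CC 1. tf f * F f)"
    define B where "B = (\<Sum>f\<in>ar CC 1. rf f * F f)"
    have "A + (1 / of_nat (Suc n)) * B \<le> 0" for n
    proof -
      have "(\<Sum>f\<in>ar CC 1. (tf f + (1 / of_nat (Suc n)) * rf f) * F f) \<le> 0"
        using wp[of n] l x unfolding is_wpol_def F_def
        by (simp add: om_def tw_def warity_def wfun_def wclone_def)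
      moreover have "(\<Sum>f\<in>ar CC 1. (tf f + (1 / of_nat (Suc n)) * rf f) * F f) = A + (1 / of_nat (Suc n)) * B"
        unfolding A_def B_def by (simp add: sum.distrib sum_distrib_left algebra_simps)
      ultimately show ?thesis by simp
    qed
    then have "A \<le> 0" by (rule arch)
    then show "(\<Sum>f\<in>ar (wclone tw) (warity tw). wfun tw f * the (snd g (apply_op f xss (fst g)))) \<le> 0"
      by (simp add: A_def F_def tw_def wclone_def warity_def wfun_def)
  qed
qed

theorem lemma2:
  shows "\<exists>(D :: nat set) \<Omega>. finite D \<and> \<Omega> \<subseteq> WD D \<and> infinite \<Omega> \<and> wPol D (Imp D \<Omega>) \<noteq> wClone D \<Omega>"
proof (intro exI conjI)
  show "finite D3" by (rule finD3)
  show "range om \<subseteq> WD D3" using weighting_om by (auto simp: WD_def)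
  show "infinite (range om)" using inj_om finite_imageD[of om UNIV] by auto
  show "wPol D3 (Imp D3 (range om)) \<noteq> wClone D3 (range om)"
    using tw_in_wPol tw_notin_WW wClone_sub by blast
qed

end
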